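(* Let $\Sigma$, $V$ and $f: V\to\mathbb{Z}^3$ be as in the context, and let $A \subseteq V$ be a set of triangles. Then: (1) $A$ is edge-connected if and only if $f(A)$ is 6-connected; (2) $A$ is vertex-connected if and only if $f(A)$ is 26-connected.
   Context: $\Sigma$ denotes the regular tiling of the Euclidean plane by congruent equilateral triangles. The lines containing the edges of the tiling fall into three parallel classes, numbered $i=1,2,3$; within each class the lines are equally spaced. $V$ denotes the set of triangles of $\Sigma$. Consistent labeling: fix a base triangle $v_0$. For $i=1,2,3$ let $H_{i,0}$ be the line of class $i$ containing a side of $v_0$, and $H_{i,-1}$ the line of class $i$ through the vertex of $v_0$ opposite that side. Index all lines of class $i$ by integers $H_{i,k}$, $k\in\mathbb{Z}$, so that consecutive (adjacent) parallel lines have consecutive indices and indices increase in the direction from $H_{i,-1}$ to $H_{i,0}$. Coordinates and cubulation map: for a triangle $v \in V$ set $v_i := k$ if $v$ lies between $H_{i,k}$ and $H_{i,k-1}$; define $f: V \to \mathbb{Z}^3$, $f(v) = (v_1, v_2, v_3)$. A set $A$ of triangles is edge-connected if for any $u,v\in A$ there is a sequence $u=w_0,w_1,\dots,w_n=v$ of triangles in $A$ with $w_j$ and $w_{j+1}$ sharing a side for all $j$; it is vertex-connected if the same holds with "sharing a side" replaced by "sharing a vertex". A set $S\subseteq\mathbb{Z}^3$ is 6-connected (face-connected) if any two points of $S$ are joined by a sequence of points of $S$ in which consecutive points differ by $1$ in exactly one coordinate and agree in the others; it is 26-connected (vertex-connected) if any two points of $S$ are joined by a sequence of points of $S$ in which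 consecutive points are distinct and differ by at most $1$ in each coordinate. *)

theory Defs
  imports "HOL-Analysis.Analysis"
begin

definition e1 :: "real \<times> real" where "e1 = (1, 0)"
definition e2 :: "real \<times> real" where "e2 = (1/2, sqrt 3 / 2)"

definition lpt :: "int \<Rightarrow> int \<Rightarrow> real \<times> real" where
  "lpt a b = of_int a *\<^sub>R e1 + of_int b *\<^sub>R e2"

definition up_tri :: "int \<Rightarrow> int \<Rightarrow> (real \<times> real) set" where
  "up_tri a b = convex hull {lpt a b, lpt (a+1) b, lpt a (b+1)}"

definition down_tri :: "int \<Rightarrow> int \<Rightarrow> (real \<times> real) set" where
  "down_tri a b = convex hull {lpt (a+1) b, lpt a (b+1), lpt (a+1) (b+1)}"

definition tiles :: "(real \<times> real) set set" where
  "tiles = {up_tri a b | a b. True} \<union> {down_tri a b | a b. True}"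

definition v0 :: "(real \<times> real) set" where "v0 = up_tri 0 0"

text \<open>Lattice coordinates (a,b) of a point p = a e1 + b e2.\<close>
definition la :: "real \<times> real \<Rightarrow> real" where "la p = fst p - snd p / sqrt 3"
definition lb :: "real \<times> real \<Rightarrow> real" where "lb p = 2 * snd p / sqrt 3"

text \<open>Class 1: lines parallel to the side [0,e1] of v0;
  class 2: parallel to the side [e1,e2]; class 3: parallel to the side [0,e2].
  In each class H_{i,0} contains the side of v0, H_{i,-1} passes through the
  opposite vertex, consecutive lines have consecutive indices and indices grow
  from H_{i,-1} towards H_{i,0}.\<close>
definition line_fun :: "nat \<Rightarrow> real \<times> real \<Rightarrow> real" where
  "line_fun i p = (if i = 1 then - lb p
                   else if i = 2 then la p + lb p - 1
                   else - la p)"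

definition H :: "nat \<Rightarrow> int \<Rightarrow> (real \<times> real) set" where
  "H i k = {p. line_fun i p = of_int k}"

definition between_lines :: "(real \<times> real) set \<Rightarrow> nat \<Rightarrow> int \<Rightarrow> bool" where
  "between_lines v i k \<longleftrightarrow> v \<subseteq> {p. of_int k - 1 \<le> line_fun i p \<and> line_fun i p \<le> of_int k}"

definition tcoord :: "nat \<Rightarrow> (real \<times> real) set \<Rightarrow> int" where
  "tcoord i v = (THE k. between_lines v i k)"

definition cub :: "(real \<times> real) set \<Rightarrow> int \<times> int \<times> int" where
  "cub v = (tcoord 1 v, tcoord 2 v, tcoord 3 v)"

definition chain_connected :: "('a \<Rightarrow> 'a \<Rightarrow> bool) \<Rightarrow> 'a set \<Rightarrow> bool" where
  "chain_connected R A \<longleftrightarrow>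
     (\<forall>u\<in>A. \<forall>v\<in>A. \<exists>ws. ws \<noteq> [] \<and> hd ws = u \<and> last ws = v \<and> set ws \<subseteq> A \<and>
        (\<forall>j. Suc j < length ws \<longrightarrow> R (ws ! j) (ws ! Suc j)))"

text \<open>Vertices of a triangle are its extreme points; a side is the segment
  between two distinct vertices.\<close>
definition share_side :: "(real \<times> real) set \<Rightarrow> (real \<times> real) set \<Rightarrow> bool" where
  "share_side u w \<longleftrightarrow> (\<exists>p q. p \<noteq> q \<and> p extreme_point_of u \<and> q extreme_point_of u \<and>
                               p extreme_point_of w \<and> q extreme_point_of w)"

definition share_vertex :: "(real \<times> real) set \<Rightarrow> (real \<times> real) set \<Rightarrow> bool" where
  "share_vertex u w \<longleftrightarrow> (\<exists>p. p extreme_point_of u \<and> p extreme_point_of w)"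

definition edge_connected :: "(real \<times> real) set set \<Rightarrow> bool" where
  "edge_connected A \<longleftrightarrow> chain_connected share_side A"

definition vertex_connected :: "(real \<times> real) set set \<Rightarrow> bool" where
  "vertex_connected A \<longleftrightarrow> chain_connected share_vertex A"

definition adj6 :: "int \<times> int \<times> int \<Rightarrow> int \<times> int \<times> int \<Rightarrow> bool" where
  "adj6 x y \<longleftrightarrow> (case x of (x1, x2, x3) \<Rightarrow> case y of (y1, y2, y3) \<Rightarrow>
      (\<bar>x1 - y1\<bar> = 1 \<and> x2 = y2 \<and> x3 = y3) \<or>
      (x1 = y1 \<and> \<bar>x2 - y2\<bar> = 1 \<and> x3 = y3) \<or>
      (x1 = y1 \<and> x2 = y2 \<and> \<bar>x3 - y3\<bar> = 1))"

definition adj26 :: "int \<times> int \<times> int \<Rightarrow> int \<times> int \<times> int \<Rightarrow> bool" where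
  "adj26 x y \<longleftrightarrow> x \<noteq> y \<and> (case x of (x1, x2, x3) \<Rightarrow> case y of (y1, y2, y3) \<Rightarrow>
      \<bar>x1 - y1\<bar> \<le> 1 \<and> \<bar>x2 - y2\<bar> \<le> 1 \<and> \<bar>x3 - y3\<bar> \<le> 1)"

definition connected6 :: "(int \<times> int \<times> int) set \<Rightarrow> bool" where
  "connected6 S \<longleftrightarrow> chain_connected adj6 S"

definition connected26 :: "(int \<times> int \<times> int) set \<Rightarrow> bool" where
  "connected26 S \<longleftrightarrow> chain_connected adj26 S"

end

theory Submission
  imports Defs
begin


lemma chain_iff:
  "chain_connected R A \<longleftrightarrow> (\<forall>u\<in>A. \<forall>v\<in>A. (\<lambda>x y. x\<noteq>y \<and> x\<in>A \<and> y\<in>A \<and> R x y)\<^sup>*\<^sup>* u v)"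
  (is "_ \<longleftrightarrow> (\<forall>u\<in>A. \<forall>v\<in>A. ?RA\<^sup>*\<^sup>* u v)")
proof
  assume c: "chain_connected R A"
  have L: "ws \<noteq> [] \<Longrightarrow> set ws \<subseteq> A \<Longrightarrow> (\<forall>j. Suc j < length ws \<longrightarrow> R (ws ! j) (ws ! Suc j))
     \<Longrightarrow> ?RA\<^sup>*\<^sup>* (hd ws) (last ws)" for ws
  proof (induction ws)
    case Nil then show ?case by simp
  next
    case (Cons x xs)
    show ?case
    proof (cases "xs = []")
      case True then show ?thesis by simp
    next
      case False
      have xs: "\<forall>j. Suc j < length xs \<longrightarrow> R (xs ! j) (xs ! Suc j)"
        using Cons.prems(3) by (metis Suc_less_eq length_Cons nth_Cons_Suc)
      have ih: "?RA\<^sup>*\<^sup>* (hd xs) (last xs)" using Cons False xs by simp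
      have "R x (hd xs)" using Cons.prems(3)[rule_format, of 0] False
        by (simp add: hd_conv_nth)
      moreover have "x \<in> A" "hd xs \<in> A" using Cons.prems(2) False by auto
      ultimately have "?RA\<^sup>*\<^sup>* x (hd xs)" by (cases "x = hd xs") auto
      then show ?thesis using ih False by simp
    qed
  qed
  show "\<forall>u\<in>A. \<forall>v\<in>A. ?RA\<^sup>*\<^sup>* u v"
  proof (intro ballI)
    fix u v assume "u \<in> A" "v \<in> A"
    then obtain ws where "ws \<noteq> []" "hd ws = u" "last ws = v" "set ws \<subseteq> A"
      "\<forall>j. Suc j < length ws \<longrightarrow> R (ws ! j) (ws ! Suc j)"
      using c unfolding chain_connected_def by blast
    then show "?RA\<^sup>*\<^sup>* u v" using L by blast
  qed
next
  assume r: "\<forall>u\<in>A. \<forall>v\<in>A. ?RA\<^sup>*\<^sup>* u v"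
  have L: "?RA\<^sup>*\<^sup>* u v \<Longrightarrow> v \<in> A \<Longrightarrow> \<exists>ws. ws \<noteq> [] \<and> hd ws = u \<and> last ws = v \<and> set ws \<subseteq> A \<and>
        (\<forall>j. Suc j < length ws \<longrightarrow> R (ws ! j) (ws ! Suc j))" for u v
  proof (induction rule: converse_rtranclp_induct)
    case base then show ?case by (intro exI[of _ "[v]"]) auto
  next
    case (step y z)
    then obtain ws where ws: "ws \<noteq> []" "hd ws = z" "last ws = v" "set ws \<subseteq> A"
      "\<forall>j. Suc j < length ws \<longrightarrow> R (ws ! j) (ws ! Suc j)" by blast
    have "\<forall>j. Suc j < length (y # ws) \<longrightarrow> R ((y#ws) ! j) ((y#ws) ! Suc j)"
    proof (intro allI impI)
      fix j assume "Suc j < length (y # ws)"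
      then show "R ((y#ws) ! j) ((y#ws) ! Suc j)"
        using ws step(1) by (cases j) (auto simp: hd_conv_nth)
    qed
    then show ?case using ws step(1) by (intro exI[of _ "y # ws"]) auto
  qed
  show "chain_connected R A" unfolding chain_connected_def using r L by blast
qed

lemma chain_transfer:
  assumes inj: "inj_on f A"
    and iff: "\<And>u w. u \<in> A \<Longrightarrow> w \<in> A \<Longrightarrow> u \<noteq> w \<Longrightarrow> (R u w \<longleftrightarrow> S (f u) (f w))"
  shows "chain_connected R A \<longleftrightarrow> chain_connected S (f ` A)"
proof -
  let ?RA = "\<lambda>x y. x\<noteq>y \<and> x\<in>A \<and> y\<in>A \<and> R x y"
  let ?SA = "\<lambda>x y. x\<noteq>y \<and> x\<in>f`A \<and> y\<in>f`A \<and> S x y"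
  define g where "g = the_inv_into A f"
  have fg: "y \<in> f ` A \<Longrightarrow> f (g y) = y" "y \<in> f ` A \<Longrightarrow> g y \<in> A" for y
    unfolding g_def using inj by (auto simp: f_the_inv_into_f the_inv_into_into)
  have gf: "x \<in> A \<Longrightarrow> g (f x) = x" for x unfolding g_def using inj by (simp add: the_inv_into_f_f)
  have k1: "?RA\<^sup>*\<^sup>* u v \<Longrightarrow> ?SA\<^sup>*\<^sup>* (f u) (f v)" for u v
  proof (induction rule: rtranclp_induct)
    case base then show ?case by simp
  next
    case (step y z)
    have "?SA (f y) (f z)" using step(2) iff inj by (auto simp: inj_on_def)
    with step(3) show ?case by (rule rtranclp.rtrancl_into_rtrancl)
  qed
  have k2: "?SA\<^sup>*\<^sup>* x y \<Longrightarrow> ?RA\<^sup>*\<^sup>* (g x) (g y)" for x y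
  proof (induction rule: rtranclp_induct)
    case base then show ?case by simp
  next
    case (step y z)
    have "?RA (g y) (g z)"
    proof -
      have "y \<in> f`A" "z \<in> f`A" "y \<noteq> z" "S y z" using step(2) by auto
      then show ?thesis using fg[of y] fg[of z] iff[of "g y" "g z"] by metis
    qed
    with step(3) show ?case by (rule rtranclp.rtrancl_into_rtrancl)
  qed
  show ?thesis unfolding chain_iff
  proof
    assume "\<forall>u\<in>A. \<forall>v\<in>A. ?RA\<^sup>*\<^sup>* u v"
    then show "\<forall>u\<in>f`A. \<forall>v\<in>f`A. ?SA\<^sup>*\<^sup>* u v" using k1 by blast
  next
    assume a: "\<forall>u\<in>f`A. \<forall>v\<in>f`A. ?SA\<^sup>*\<^sup>* u v"
    show "\<forall>u\<in>A. \<forall>v\<in>A. ?RA\<^sup>*\<^sup>* u v"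
    proof (intro ballI)
      fix u v assume "u \<in> A" "v \<in> A"
      then have "?RA\<^sup>*\<^sup>* (g (f u)) (g (f v))" using a k2 by blast
      then show "?RA\<^sup>*\<^sup>* u v" using gf \<open>u\<in>A\<close> \<open>v\<in>A\<close> by simp
    qed
  qed
qed



lemma la_lpt[simp]: "la (lpt a b) = of_int a"
  by (simp add: la_def lpt_def e1_def e2_def)
lemma lb_lpt[simp]: "lb (lpt a b) = of_int b"
  by (simp add: lb_def lpt_def e1_def e2_def)
lemma la_add[simp]: "la (x + y) = la x + la y"
  by (simp add: la_def add_divide_distrib)
lemma lb_add[simp]: "lb (x + y) = lb x + lb y"
  by (simp add: lb_def add_divide_distrib)
lemma la_scale[simp]: "la (u *\<^sub>R x) = u * la x"
  by (simp add: la_def algebra_simps)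
lemma lb_scale[simp]: "lb (u *\<^sub>R x) = u * lb x"
  by (simp add: lb_def algebra_simps)
lemma lalb_inj: "la p = la q \<Longrightarrow> lb p = lb q \<Longrightarrow> p = q"
  by (cases p; cases q) (simp add: la_def lb_def)
lemma lpt_inj[simp]: "lpt a b = lpt c d \<longleftrightarrow> a = c \<and> b = d"
  by (metis la_lpt lb_lpt of_int_eq_iff)

lemma not_in_seg:
  assumes "\<alpha> * la P + \<beta> * lb P = c" "\<alpha> * la Q + \<beta> * lb Q = c" "\<alpha> * la X + \<beta> * lb X \<noteq> c"
  shows "X \<notin> convex hull {P, Q}"
proof
  assume "X \<in> convex hull {P, Q}"
  then obtain u v where uv: "u + v = 1" "X = u *\<^sub>R P + v *\<^sub>R Q" by (auto simp: convex_hull_2)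
  have "\<alpha> * la X + \<beta> * lb X = u * (\<alpha> * la P + \<beta> * lb P) + v * (\<alpha> * la Q + \<beta> * lb Q)"
    using uv by (simp add: algebra_simps)
  also have "\<dots> = (u + v) * c" using assms by (simp add: algebra_simps)
  finally show False using assms uv by simp
qed

lemma ext_up: "p extreme_point_of up_tri a b \<longleftrightarrow> p \<in> {lpt a b, lpt (a+1) b, lpt a (b+1)}"
proof
  assume "p extreme_point_of up_tri a b"
  then show "p \<in> {lpt a b, lpt (a+1) b, lpt a (b+1)}"
    unfolding up_tri_def by (rule extreme_point_of_convex_hull)
next
  have 1: "lpt a b extreme_point_of up_tri a b"
    unfolding up_tri_def
    by (rule extreme_point_of_convex_hull_insert, simp, rule not_in_seg[where \<alpha>=1 and \<beta>=1 and c="of_int a + of_int b + 1"], simp_all)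
  have 2: "lpt (a+1) b extreme_point_of up_tri a b"
    unfolding up_tri_def insert_commute[of "lpt a b"]
    by (rule extreme_point_of_convex_hull_insert, simp, rule not_in_seg[where \<alpha>=1 and \<beta>=0 and c="of_int a"], simp_all)
  have 3: "lpt a (b+1) extreme_point_of up_tri a b"
    unfolding up_tri_def insert_commute[of "lpt (a+1) b" "lpt a (b+1)"] insert_commute[of "lpt a b" "lpt a (b+1)"]
    by (rule extreme_point_of_convex_hull_insert, simp, rule not_in_seg[where \<alpha>=0 and \<beta>=1 and c="of_int b"], simp_all)
  assume "p \<in> {lpt a b, lpt (a+1) b, lpt a (b+1)}"
  then show "p extreme_point_of up_tri a b" using 1 2 3 by auto
qed

lemma ext_down: "p extreme_point_of down_tri a b \<longleftrightarrow> p \<in> {lpt (a+1) b, lpt a (b+1), lpt (a+1) (b+1)}"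
proof
  assume "p extreme_point_of down_tri a b"
  then show "p \<in> {lpt (a+1) b, lpt a (b+1), lpt (a+1) (b+1)}"
    unfolding down_tri_def by (rule extreme_point_of_convex_hull)
next
  have 1: "lpt (a+1) b extreme_point_of down_tri a b"
    unfolding down_tri_def
    by (rule extreme_point_of_convex_hull_insert, simp, rule not_in_seg[where \<alpha>=0 and \<beta>=1 and c="of_int b + 1"], simp_all)
  have 2: "lpt a (b+1) extreme_point_of down_tri a b"
    unfolding down_tri_def insert_commute[of "lpt (a+1) b"]
    by (rule extreme_point_of_convex_hull_insert, simp, rule not_in_seg[where \<alpha>=1 and \<beta>=0 and c="of_int a + 1"], simp_all)
  have 3: "lpt (a+1) (b+1) extreme_point_of down_tri a b"
    unfolding down_tri_def insert_commute[of "lpt a (b+1)" "lpt (a+1) (b+1)"] insert_commute[of "lpt (a+1) b" "lpt (a+1) (b+1)"]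
    by (rule extreme_point_of_convex_hull_insert, simp, rule not_in_seg[where \<alpha>=1 and \<beta>=1 and c="of_int a + of_int b + 1"], simp_all)
  assume "p \<in> {lpt (a+1) b, lpt a (b+1), lpt (a+1) (b+1)}"
  then show "p extreme_point_of down_tri a b" using 1 2 3 by auto
qed

lemma up_mem:
  assumes "p \<in> up_tri a b"
  shows "of_int a \<le> la p \<and> of_int b \<le> lb p \<and> la p + lb p \<le> of_int a + of_int b + 1"
proof -
  obtain u v w where uvw: "0 \<le> u" "0 \<le> v" "0 \<le> w" "u + v + w = 1"
    "p = u *\<^sub>R lpt a b + v *\<^sub>R lpt (a+1) b + w *\<^sub>R lpt a (b+1)"
    using assms unfolding up_tri_def convex_hull_3 by blast
  have "la p = (u+v+w) * of_int a + v" "lb p = (u+v+w) * of_int b + w"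
    using uvw(5) by (simp_all add: algebra_simps)
  then show ?thesis using uvw by simp
qed

lemma down_mem:
  assumes "p \<in> down_tri a b"
  shows "la p \<le> of_int a + 1 \<and> lb p \<le> of_int b + 1 \<and> of_int a + of_int b + 1 \<le> la p + lb p"
proof -
  obtain u v w where uvw: "0 \<le> u" "0 \<le> v" "0 \<le> w" "u + v + w = 1"
    "p = u *\<^sub>R lpt (a+1) b + v *\<^sub>R lpt a (b+1) + w *\<^sub>R lpt (a+1) (b+1)"
    using assms unfolding down_tri_def convex_hull_3 by blast
  have "la p = (u+v+w) * (of_int a + 1) - v" "lb p = (u+v+w) * (of_int b + 1) - u"
    using uvw(5) by (simp_all add: algebra_simps)
  then show ?thesis using uvw by simp
qed

lemma up_v: "lpt a b \<in> up_tri a b" "lpt (a+1) b \<in> up_tri a b" "lpt a (b+1) \<in> up_tri a b"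
  unfolding up_tri_def by (simp_all add: hull_inc)
lemma down_v: "lpt (a+1) b \<in> down_tri a b" "lpt a (b+1) \<in> down_tri a b" "lpt (a+1) (b+1) \<in> down_tri a b"
  unfolding down_tri_def by (simp_all add: hull_inc)

lemma bl_up2: "between_lines (up_tri a b) 2 k \<longleftrightarrow> k = a + b"
proof
  assume h: "between_lines (up_tri a b) 2 k"
  have "of_int k - 1 \<le> (of_int a + of_int b - 1::real)" "(of_int a + of_int b::real) \<le> of_int k"
    using h up_v unfolding between_lines_def line_fun_def by force+
  then show "k = a + b" by linarith
next
  assume "k = a + b" then show "between_lines (up_tri a b) 2 k"
    unfolding between_lines_def line_fun_def using up_mem by fastforce
qed

lemma bl_up3: "between_lines (up_tri a b) 3 k \<longleftrightarrow> k = - a"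
proof
  assume h: "between_lines (up_tri a b) 3 k"
  have "of_int k - 1 \<le> (- of_int a - 1::real)" "(- of_int a::real) \<le> of_int k"
    using h up_v unfolding between_lines_def line_fun_def by force+
  then show "k = - a" by linarith
next
  assume "k = - a" then show "between_lines (up_tri a b) 3 k"
    unfolding between_lines_def line_fun_def using up_mem by fastforce
qed

lemma bl_down1: "between_lines (down_tri a b) 1 k \<longleftrightarrow> k = - b"
proof
  assume h: "between_lines (down_tri a b) 1 k"
  have "of_int k - 1 \<le> (- of_int b - 1::real)" "(- of_int b::real) \<le> of_int k"
    using h down_v unfolding between_lines_def line_fun_def by force+
  then show "k = - b" by linarith
next
  assume "k = - b" then show "between_lines (down_tri a b) 1 k"
    unfolding between_lines_def line_fun_def using down_mem by fastforce
qed

lemma bl_down2: "between_lines (down_tri a b) 2 k \<longleftrightarrow> k = a + b + 1"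
proof
  assume h: "between_lines (down_tri a b) 2 k"
  have "of_int k - 1 \<le> (of_int a + of_int b::real)" "(of_int a + of_int b + 1::real) \<le> of_int k"
    using h down_v unfolding between_lines_def line_fun_def by force+
  then show "k = a + b + 1" by linarith
next
  assume "k = a + b + 1" then show "between_lines (down_tri a b) 2 k"
    unfolding between_lines_def line_fun_def using down_mem by fastforce
qed

lemma bl_down3: "between_lines (down_tri a b) 3 k \<longleftrightarrow> k = - a"
proof
  assume h: "between_lines (down_tri a b) 3 k"
  have "of_int k - 1 \<le> (- of_int a - 1::real)" "(- of_int a::real) \<le> of_int k"
    using h down_v unfolding between_lines_def line_fun_def by force+
  then show "k = - a" by linarith
next
  assume "k = - a" then show "between_lines (down_tri a b) 3 k"
    unfolding between_lines_def line_fun_def using down_mem by fastforce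
qed

lemma bl_up1: "between_lines (up_tri a b) 1 k \<longleftrightarrow> k = - b"
proof
  assume h: "between_lines (up_tri a b) 1 k"
  have "of_int k - 1 \<le> - (of_int b::real)" "- (of_int b::real) - 1 \<ge> of_int k - 1"
       "- (of_int b::real) \<le> of_int k"
    using h up_v unfolding between_lines_def line_fun_def by force+
  then show "k = - b" by linarith
next
  assume "k = - b" then show "between_lines (up_tri a b) 1 k"
    unfolding between_lines_def line_fun_def using up_mem by fastforce
qed

lemma cub_up: "cub (up_tri a b) = (- b, a + b, - a)"
  unfolding cub_def tcoord_def bl_up1 bl_up2 bl_up3 by simp
lemma cub_down: "cub (down_tri a b) = (- b, a + b + 1, - a)"
  unfolding cub_def tcoord_def bl_down1 bl_down2 bl_down3 by simp



definition SU :: "int \<Rightarrow> int \<Rightarrow> (int \<times> int) set" where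
  "SU a b = {(a,b),(a+1,b),(a,b+1)}"
definition SD :: "int \<Rightarrow> int \<Rightarrow> (int \<times> int) set" where
  "SD a b = {(a+1,b),(a,b+1),(a+1,b+1)}"
definition two :: "(int \<times> int) set \<Rightarrow> (int \<times> int) set \<Rightarrow> bool" where
  "two S T \<longleftrightarrow> (\<exists>x y. x \<noteq> y \<and> x \<in> S \<inter> T \<and> y \<in> S \<inter> T)"

lemma box0: "\<bar>n\<bar> \<le> 1 \<Longrightarrow> \<bar>m + n\<bar> \<le> (1::int) \<Longrightarrow> \<bar>m\<bar> \<le> 1 \<Longrightarrow> (m, n) \<noteq> (0, 0) \<Longrightarrow>
   (m, n) \<in> {(- 1, 0), (- 1, 1), (0, - 1), (0, 1), (1, - 1), (1, 0)}"
proof -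
  assume h: "\<bar>n\<bar> \<le> 1" "\<bar>m + n\<bar> \<le> (1::int)" "\<bar>m\<bar> \<le> 1" "(m, n) \<noteq> (0, 0)"
  have "m = -1 \<or> m = 0 \<or> m = 1" "n = -1 \<or> n = 0 \<or> n = 1" using h by arith+
  then show ?thesis using h by (elim disjE; simp)
qed

lemma box1: "\<bar>n\<bar> \<le> 1 \<Longrightarrow> \<bar>m + n + 1\<bar> \<le> (1::int) \<Longrightarrow> \<bar>m\<bar> \<le> 1 \<Longrightarrow>
   (m, n) \<in> {(- 1, - 1), (- 1, 0), (- 1, 1), (0, - 1), (0, 0), (1, - 1)}"
proof -
  assume h: "\<bar>n\<bar> \<le> 1" "\<bar>m + n + 1\<bar> \<le> (1::int)" "\<bar>m\<bar> \<le> 1"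
  have "m = -1 \<or> m = 0 \<or> m = 1" "n = -1 \<or> n = 0 \<or> n = 1" using h by arith+
  then show ?thesis using h by (elim disjE; simp)
qed

lemma two_alt: "two S T \<longleftrightarrow> (\<exists>x\<in>S\<inter>T. \<exists>y\<in>S\<inter>T. x \<noteq> y)"
  unfolding two_def by blast

lemma adj6_adj26: "adj6 x y \<Longrightarrow> adj26 x y"
  unfolding adj6_def adj26_def by (cases x; cases y) auto

lemma uu_cases: "x \<in> SU a b \<Longrightarrow> x \<in> SU c d \<Longrightarrow> (c - a, d - b) \<in> {(- 1, 0), (- 1, 1), (0, - 1), (0, 0), (0, 1), (1, - 1), (1, 0)}"
  unfolding SU_def SU_def by (elim insertE emptyE; simp)

lemma uu_adj26:
  assumes "adj26 (- b, a + b, - a) (- d, c + d, - c)"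
  shows "(c - a, d - b) \<in> {(- 1, 0), (- 1, 1), (0, - 1), (0, 1), (1, - 1), (1, 0)}"
proof -
  have h: "(- b, a + b, - a) \<noteq> (- d, c + d, - c)" "\<bar>- b - - d\<bar> \<le> 1" "\<bar>(a + b) - (c + d)\<bar> \<le> 1" "\<bar>- a - - c\<bar> \<le> 1"
    using assms unfolding adj26_def prod.case by blast+
  have bnd: "\<bar>d - b\<bar> \<le> 1" "\<bar>(c - a) + (d - b)\<bar> \<le> 1" "\<bar>c - a\<bar> \<le> 1" using h(2-4) by arith+
  have nz: "(c - a, d - b) \<noteq> (0, 0)" using h(1) by auto
  show ?thesis by (rule box0[OF bnd nz])
qed

lemma uu_0: "c = a - 1 \<Longrightarrow> d = b \<Longrightarrow> SU a b \<inter> SU c d = {(a, b)}"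
  by (auto simp: SU_def SU_def)

lemma uu_1: "c = a - 1 \<Longrightarrow> d = b + 1 \<Longrightarrow> SU a b \<inter> SU c d = {(a, b + 1)}"
  by (auto simp: SU_def SU_def)

lemma uu_2: "c = a \<Longrightarrow> d = b - 1 \<Longrightarrow> SU a b \<inter> SU c d = {(a, b)}"
  by (auto simp: SU_def SU_def)

lemma uu_3: "c = a \<Longrightarrow> d = b + 1 \<Longrightarrow> SU a b \<inter> SU c d = {(a, b + 1)}"
  by (auto simp: SU_def SU_def)

lemma uu_4: "c = a + 1 \<Longrightarrow> d = b - 1 \<Longrightarrow> SU a b \<inter> SU c d = {(a + 1, b)}"
  by (auto simp: SU_def SU_def)

lemma uu_5: "c = a + 1 \<Longrightarrow> d = b \<Longrightarrow> SU a b \<inter> SU c d = {(a + 1, b)}"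
  by (auto simp: SU_def SU_def)

lemma uu_rel:
  assumes nz: "(a, b) \<noteq> (c, d)"
  shows "(two (SU a b) (SU c d) \<longleftrightarrow> adj6 (- b, a + b, - a) (- d, c + d, - c)) \<and>
   (SU a b \<inter> SU c d \<noteq> {} \<longleftrightarrow> adj26 (- b, a + b, - a) (- d, c + d, - c))"
proof (cases "(c - a, d - b) \<in> {(- 1, 0), (- 1, 1), (0, - 1), (0, 1), (1, - 1), (1, 0)}")
  case True
  then have "(c - a = - 1 \<and> d - b = 0) \<or> (c - a = - 1 \<and> d - b = 1) \<or> (c - a = 0 \<and> d - b = - 1) \<or> (c - a = 0 \<and> d - b = 1) \<or> (c - a = 1 \<and> d - b = - 1) \<or> (c - a = 1 \<and> d - b = 0)" by simp
  then show ?thesis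
  proof (elim disjE conjE)
    assume "c - a = - 1" "d - b = 0"
    then have "c = a - 1" "d = b" by simp_all
    then show ?thesis by (simp add: uu_0 two_alt adj6_def adj26_def; blast?)
  next
    assume "c - a = - 1" "d - b = 1"
    then have "c = a - 1" "d = b + 1" by simp_all
    then show ?thesis by (simp add: uu_1 two_alt adj6_def adj26_def; blast?)
  next
    assume "c - a = 0" "d - b = - 1"
    then have "c = a" "d = b - 1" by simp_all
    then show ?thesis by (simp add: uu_2 two_alt adj6_def adj26_def; blast?)
  next
    assume "c - a = 0" "d - b = 1"
    then have "c = a" "d = b + 1" by simp_all
    then show ?thesis by (simp add: uu_3 two_alt adj6_def adj26_def; blast?)
  next
    assume "c - a = 1" "d - b = - 1"
    then have "c = a + 1" "d = b - 1" by simp_all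
    then show ?thesis by (simp add: uu_4 two_alt adj6_def adj26_def; blast?)
  next
    assume "c - a = 1" "d - b = 0"
    then have "c = a + 1" "d = b" by simp_all
    then show ?thesis by (simp add: uu_5 two_alt adj6_def adj26_def; blast?)
  qed
next
  case False
  have e: "SU a b \<inter> SU c d = {}"
  proof (rule ccontr)
    assume "SU a b \<inter> SU c d \<noteq> {}"
    then obtain x where "x \<in> SU a b" "x \<in> SU c d" by blast
    then have "(c - a, d - b) \<in> {(- 1, 0), (- 1, 1), (0, - 1), (0, 0), (0, 1), (1, - 1), (1, 0)}" by (rule uu_cases)
    then show False using False nz by auto
  qed
  have n26: "\<not> adj26 (- b, a + b, - a) (- d, c + d, - c)" using uu_adj26 False by blast
  have n6: "\<not> adj6 (- b, a + b, - a) (- d, c + d, - c)" using adj6_adj26 n26 by blast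
  show ?thesis using n26 n6 by (simp add: e two_def)
qed

lemma dd_cases: "x \<in> SD a b \<Longrightarrow> x \<in> SD c d \<Longrightarrow> (c - a, d - b) \<in> {(- 1, 0), (- 1, 1), (0, - 1), (0, 0), (0, 1), (1, - 1), (1, 0)}"
  unfolding SD_def SD_def by (elim insertE emptyE; simp)

lemma dd_adj26:
  assumes "adj26 (- b, a + b + 1, - a) (- d, c + d + 1, - c)"
  shows "(c - a, d - b) \<in> {(- 1, 0), (- 1, 1), (0, - 1), (0, 1), (1, - 1), (1, 0)}"
proof -
  have h: "(- b, a + b + 1, - a) \<noteq> (- d, c + d + 1, - c)" "\<bar>- b - - d\<bar> \<le> 1" "\<bar>(a + b + 1) - (c + d + 1)\<bar> \<le> 1" "\<bar>- a - - c\<bar> \<le> 1"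
    using assms unfolding adj26_def prod.case by blast+
  have bnd: "\<bar>d - b\<bar> \<le> 1" "\<bar>(c - a) + (d - b)\<bar> \<le> 1" "\<bar>c - a\<bar> \<le> 1" using h(2-4) by arith+
  have nz: "(c - a, d - b) \<noteq> (0, 0)" using h(1) by auto
  show ?thesis by (rule box0[OF bnd nz])
qed

lemma dd_0: "c = a - 1 \<Longrightarrow> d = b \<Longrightarrow> SD a b \<inter> SD c d = {(a, b + 1)}"
  by (auto simp: SD_def SD_def)

lemma dd_1: "c = a - 1 \<Longrightarrow> d = b + 1 \<Longrightarrow> SD a b \<inter> SD c d = {(a, b + 1)}"
  by (auto simp: SD_def SD_def)

lemma dd_2: "c = a \<Longrightarrow> d = b - 1 \<Longrightarrow> SD a b \<inter> SD c d = {(a + 1, b)}"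
  by (auto simp: SD_def SD_def)

lemma dd_3: "c = a \<Longrightarrow> d = b + 1 \<Longrightarrow> SD a b \<inter> SD c d = {(a + 1, b + 1)}"
  by (auto simp: SD_def SD_def)

lemma dd_4: "c = a + 1 \<Longrightarrow> d = b - 1 \<Longrightarrow> SD a b \<inter> SD c d = {(a + 1, b)}"
  by (auto simp: SD_def SD_def)

lemma dd_5: "c = a + 1 \<Longrightarrow> d = b \<Longrightarrow> SD a b \<inter> SD c d = {(a + 1, b + 1)}"
  by (auto simp: SD_def SD_def)

lemma dd_rel:
  assumes nz: "(a, b) \<noteq> (c, d)"
  shows "(two (SD a b) (SD c d) \<longleftrightarrow> adj6 (- b, a + b + 1, - a) (- d, c + d + 1, - c)) \<and>
   (SD a b \<inter> SD c d \<noteq> {} \<longleftrightarrow> adj26 (- b, a + b + 1, - a) (- d, c + d + 1, - c))"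
proof (cases "(c - a, d - b) \<in> {(- 1, 0), (- 1, 1), (0, - 1), (0, 1), (1, - 1), (1, 0)}")
  case True
  then have "(c - a = - 1 \<and> d - b = 0) \<or> (c - a = - 1 \<and> d - b = 1) \<or> (c - a = 0 \<and> d - b = - 1) \<or> (c - a = 0 \<and> d - b = 1) \<or> (c - a = 1 \<and> d - b = - 1) \<or> (c - a = 1 \<and> d - b = 0)" by simp
  then show ?thesis
  proof (elim disjE conjE)
    assume "c - a = - 1" "d - b = 0"
    then have "c = a - 1" "d = b" by simp_all
    then show ?thesis by (simp add: dd_0 two_alt adj6_def adj26_def; blast?)
  next
    assume "c - a = - 1" "d - b = 1"
    then have "c = a - 1" "d = b + 1" by simp_all
    then show ?thesis by (simp add: dd_1 two_alt adj6_def adj26_def; blast?)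
  next
    assume "c - a = 0" "d - b = - 1"
    then have "c = a" "d = b - 1" by simp_all
    then show ?thesis by (simp add: dd_2 two_alt adj6_def adj26_def; blast?)
  next
    assume "c - a = 0" "d - b = 1"
    then have "c = a" "d = b + 1" by simp_all
    then show ?thesis by (simp add: dd_3 two_alt adj6_def adj26_def; blast?)
  next
    assume "c - a = 1" "d - b = - 1"
    then have "c = a + 1" "d = b - 1" by simp_all
    then show ?thesis by (simp add: dd_4 two_alt adj6_def adj26_def; blast?)
  next
    assume "c - a = 1" "d - b = 0"
    then have "c = a + 1" "d = b" by simp_all
    then show ?thesis by (simp add: dd_5 two_alt adj6_def adj26_def; blast?)
  qed
next
  case False
  have e: "SD a b \<inter> SD c d = {}"
  proof (rule ccontr)
    assume "SD a b \<inter> SD c d \<noteq> {}"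
    then obtain x where "x \<in> SD a b" "x \<in> SD c d" by blast
    then have "(c - a, d - b) \<in> {(- 1, 0), (- 1, 1), (0, - 1), (0, 0), (0, 1), (1, - 1), (1, 0)}" by (rule dd_cases)
    then show False using False nz by auto
  qed
  have n26: "\<not> adj26 (- b, a + b + 1, - a) (- d, c + d + 1, - c)" using dd_adj26 False by blast
  have n6: "\<not> adj6 (- b, a + b + 1, - a) (- d, c + d + 1, - c)" using adj6_adj26 n26 by blast
  show ?thesis using n26 n6 by (simp add: e two_def)
qed

lemma ud_cases: "x \<in> SU a b \<Longrightarrow> x \<in> SD c d \<Longrightarrow> (c - a, d - b) \<in> {(- 1, - 1), (- 1, 0), (- 1, 1), (0, - 1), (0, 0), (1, - 1)}"
  unfolding SU_def SD_def by (elim insertE emptyE; simp)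

lemma ud_adj26:
  assumes "adj26 (- b, a + b, - a) (- d, c + d + 1, - c)"
  shows "(c - a, d - b) \<in> {(- 1, - 1), (- 1, 0), (- 1, 1), (0, - 1), (0, 0), (1, - 1)}"
proof -
  have h: "(- b, a + b, - a) \<noteq> (- d, c + d + 1, - c)" "\<bar>- b - - d\<bar> \<le> 1" "\<bar>(a + b) - (c + d + 1)\<bar> \<le> 1" "\<bar>- a - - c\<bar> \<le> 1"
    using assms unfolding adj26_def prod.case by blast+
  have bnd: "\<bar>d - b\<bar> \<le> 1" "\<bar>(c - a) + (d - b) + 1\<bar> \<le> 1" "\<bar>c - a\<bar> \<le> 1" using h(2-4) by arith+
  show ?thesis by (rule box1[OF bnd])
qed

lemma ud_0: "c = a - 1 \<Longrightarrow> d = b - 1 \<Longrightarrow> SU a b \<inter> SD c d = {(a, b)}"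
  by (auto simp: SU_def SD_def)

lemma ud_1: "c = a - 1 \<Longrightarrow> d = b \<Longrightarrow> SU a b \<inter> SD c d = {(a, b), (a, b + 1)}"
  by (auto simp: SU_def SD_def)

lemma ud_2: "c = a - 1 \<Longrightarrow> d = b + 1 \<Longrightarrow> SU a b \<inter> SD c d = {(a, b + 1)}"
  by (auto simp: SU_def SD_def)

lemma ud_3: "c = a \<Longrightarrow> d = b - 1 \<Longrightarrow> SU a b \<inter> SD c d = {(a, b), (a + 1, b)}"
  by (auto simp: SU_def SD_def)

lemma ud_4: "c = a \<Longrightarrow> d = b \<Longrightarrow> SU a b \<inter> SD c d = {(a, b + 1), (a + 1, b)}"
  by (auto simp: SU_def SD_def)

lemma ud_5: "c = a + 1 \<Longrightarrow> d = b - 1 \<Longrightarrow> SU a b \<inter> SD c d = {(a + 1, b)}"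
  by (auto simp: SU_def SD_def)

lemma ud_rel:
  shows "(two (SU a b) (SD c d) \<longleftrightarrow> adj6 (- b, a + b, - a) (- d, c + d + 1, - c)) \<and>
   (SU a b \<inter> SD c d \<noteq> {} \<longleftrightarrow> adj26 (- b, a + b, - a) (- d, c + d + 1, - c))"
proof (cases "(c - a, d - b) \<in> {(- 1, - 1), (- 1, 0), (- 1, 1), (0, - 1), (0, 0), (1, - 1)}")
  case True
  then have "(c - a = - 1 \<and> d - b = - 1) \<or> (c - a = - 1 \<and> d - b = 0) \<or> (c - a = - 1 \<and> d - b = 1) \<or> (c - a = 0 \<and> d - b = - 1) \<or> (c - a = 0 \<and> d - b = 0) \<or> (c - a = 1 \<and> d - b = - 1)" by simp
  then show ?thesis
  proof (elim disjE conjE)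
    assume "c - a = - 1" "d - b = - 1"
    then have "c = a - 1" "d = b - 1" by simp_all
    then show ?thesis by (simp add: ud_0 two_alt adj6_def adj26_def; blast?)
  next
    assume "c - a = - 1" "d - b = 0"
    then have "c = a - 1" "d = b" by simp_all
    then show ?thesis by (simp add: ud_1 two_alt adj6_def adj26_def; blast?)
  next
    assume "c - a = - 1" "d - b = 1"
    then have "c = a - 1" "d = b + 1" by simp_all
    then show ?thesis by (simp add: ud_2 two_alt adj6_def adj26_def; blast?)
  next
    assume "c - a = 0" "d - b = - 1"
    then have "c = a" "d = b - 1" by simp_all
    then show ?thesis by (simp add: ud_3 two_alt adj6_def adj26_def; blast?)
  next
    assume "c - a = 0" "d - b = 0"
    then have "c = a" "d = b" by simp_all
    then show ?thesis by (simp add: ud_4 two_alt adj6_def adj26_def; blast?)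
  next
    assume "c - a = 1" "d - b = - 1"
    then have "c = a + 1" "d = b - 1" by simp_all
    then show ?thesis by (simp add: ud_5 two_alt adj6_def adj26_def; blast?)
  qed
next
  case False
  have e: "SU a b \<inter> SD c d = {}"
  proof (rule ccontr)
    assume "SU a b \<inter> SD c d \<noteq> {}"
    then obtain x where "x \<in> SU a b" "x \<in> SD c d" by blast
    then have "(c - a, d - b) \<in> {(- 1, - 1), (- 1, 0), (- 1, 1), (0, - 1), (0, 0), (1, - 1)}" by (rule ud_cases)
    then show False using False by auto
  qed
  have n26: "\<not> adj26 (- b, a + b, - a) (- d, c + d + 1, - c)" using ud_adj26 False by blast
  have n6: "\<not> adj6 (- b, a + b, - a) (- d, c + d + 1, - c)" using adj6_adj26 n26 by blast
  show ?thesis using n26 n6 by (simp add: e two_def)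
qed



lemma ext_up': "p extreme_point_of up_tri a b \<longleftrightarrow> p \<in> case_prod lpt ` SU a b"
  by (simp add: ext_up SU_def)
lemma ext_down': "p extreme_point_of down_tri a b \<longleftrightarrow> p \<in> case_prod lpt ` SD a b"
  by (simp add: ext_down SD_def)

lemma injL: "inj (case_prod lpt)"
  by (auto simp: inj_on_def)

lemma imgI2: "p \<in> case_prod lpt ` S \<Longrightarrow> p \<in> case_prod lpt ` T \<Longrightarrow> \<exists>x\<in>S \<inter> T. p = case_prod lpt x"
proof -
  assume "p \<in> case_prod lpt ` S" "p \<in> case_prod lpt ` T"
  then obtain x y where x: "x \<in> S" "p = case_prod lpt x" and y: "y \<in> T" "p = case_prod lpt y" by blast
  then have "x = y" using injL by (metis injD)
  then show ?thesis using x y by blast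
qed

lemma side_gen:
  assumes A: "\<And>p. p extreme_point_of u \<longleftrightarrow> p \<in> case_prod lpt ` S"
    and B: "\<And>p. p extreme_point_of w \<longleftrightarrow> p \<in> case_prod lpt ` T"
  shows "share_side u w \<longleftrightarrow> two S T"
proof
  assume "share_side u w"
  then obtain p q where pq: "p \<noteq> q" "p extreme_point_of u" "q extreme_point_of u"
    "p extreme_point_of w" "q extreme_point_of w"
    unfolding share_side_def by blast
  obtain x where x: "x \<in> S \<inter> T" "p = case_prod lpt x"
    using imgI2[OF A[THEN iffD1, OF pq(2)] B[THEN iffD1, OF pq(4)]] by blast
  obtain y where y: "y \<in> S \<inter> T" "q = case_prod lpt y"
    using imgI2[OF A[THEN iffD1, OF pq(3)] B[THEN iffD1, OF pq(5)]] by blast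
  have "x \<noteq> y" using x y pq(1) by blast
  then show "two S T" unfolding two_def using x(1) y(1) by blast
next
  assume "two S T"
  then obtain x y where xy: "x \<noteq> y" "x \<in> S \<inter> T" "y \<in> S \<inter> T" unfolding two_def by blast
  have ne: "case_prod lpt x \<noteq> case_prod lpt y" using xy(1) injL by (meson injD)
  have "case_prod lpt x extreme_point_of u" "case_prod lpt y extreme_point_of u"
       "case_prod lpt x extreme_point_of w" "case_prod lpt y extreme_point_of w"
    using xy(2,3) by (simp_all only: A B Int_iff image_eqI)
  then show "share_side u w" unfolding share_side_def using ne by blast
qed

lemma vertex_gen:
  assumes A: "\<And>p. p extreme_point_of u \<longleftrightarrow> p \<in> case_prod lpt ` S"
    and B: "\<And>p. p extreme_point_of w \<longleftrightarrow> p \<in> case_prod lpt ` T"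
  shows "share_vertex u w \<longleftrightarrow> S \<inter> T \<noteq> {}"
proof
  assume "share_vertex u w"
  then obtain p where "p extreme_point_of u" "p extreme_point_of w" unfolding share_vertex_def by blast
  then obtain x where "x \<in> S \<inter> T" using imgI2 A B by metis
  then show "S \<inter> T \<noteq> {}" by blast
next
  assume "S \<inter> T \<noteq> {}"
  then obtain x where x: "x \<in> S \<inter> T" by blast
  have "case_prod lpt x extreme_point_of u" "case_prod lpt x extreme_point_of w"
    using x by (simp_all only: A B Int_iff image_eqI)
  then show "share_vertex u w" unfolding share_vertex_def by blast
qed

lemma tile_cases:
  assumes "u \<in> tiles"
  obtains a b where "u = up_tri a b" | a b where "u = down_tri a b"
  using assms unfolding tiles_def by blast

lemma side_sym: "share_side u w \<longleftrightarrow> share_side w u"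
  unfolding share_side_def by blast
lemma vertex_sym: "share_vertex u w \<longleftrightarrow> share_vertex w u"
  unfolding share_vertex_def by blast
lemma adj6_sym: "adj6 x y \<longleftrightarrow> adj6 y x"
  unfolding adj6_def by (cases x; cases y) (auto simp: abs_minus_commute)
lemma adj26_sym: "adj26 x y \<longleftrightarrow> adj26 y x"
  unfolding adj26_def by (cases x; cases y) (auto simp: abs_minus_commute)

lemma rel:
  assumes "u \<in> tiles" "w \<in> tiles" "u \<noteq> w"
  shows "(share_side u w \<longleftrightarrow> adj6 (cub u) (cub w)) \<and>
         (share_vertex u w \<longleftrightarrow> adj26 (cub u) (cub w))"
proof -
  have UD: "(share_side (up_tri a b) (down_tri c d) \<longleftrightarrow> adj6 (cub (up_tri a b)) (cub (down_tri c d))) \<and>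
         (share_vertex (up_tri a b) (down_tri c d) \<longleftrightarrow> adj26 (cub (up_tri a b)) (cub (down_tri c d)))" for a b c d
    using ud_rel[of a b c d] by (simp add: side_gen[OF ext_up' ext_down'] vertex_gen[OF ext_up' ext_down'] cub_up cub_down)
  show ?thesis
  proof (cases rule: tile_cases[OF assms(1)])
    case (1 a b)
    show ?thesis
    proof (cases rule: tile_cases[OF assms(2)])
      case (1 c d)
      then have "(a,b) \<noteq> (c,d)" using assms(3) \<open>u = up_tri a b\<close> by auto
      then show ?thesis using 1 \<open>u = up_tri a b\<close> uu_rel[OF \<open>(a,b) \<noteq> (c,d)\<close>]
        by (simp add: side_gen[OF ext_up' ext_up'] vertex_gen[OF ext_up' ext_up'] cub_up)
    next
      case (2 c d) then show ?thesis using UD \<open>u = up_tri a b\<close> by simp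
    qed
  next
    case (2 a b)
    show ?thesis
    proof (cases rule: tile_cases[OF assms(2)])
      case (1 c d) then show ?thesis using UD[of c d a b] \<open>u = down_tri a b\<close>
        by (metis side_sym vertex_sym adj6_sym adj26_sym)
    next
      case (2 c d)
      then have "(a,b) \<noteq> (c,d)" using assms(3) \<open>u = down_tri a b\<close> by auto
      then show ?thesis using 2 \<open>u = down_tri a b\<close> dd_rel[OF \<open>(a,b) \<noteq> (c,d)\<close>]
        by (simp add: side_gen[OF ext_down' ext_down'] vertex_gen[OF ext_down' ext_down'] cub_down)
    qed
  qed
qed

lemma cub_inj: "inj_on cub tiles"
proof (rule inj_onI)
  fix u w assume u: "u \<in> tiles" and w: "w \<in> tiles" and e: "cub u = cub w"
  show "u = w"
  proof (cases rule: tile_cases[OF u])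
    case (1 a b)
    then show ?thesis
      by (cases rule: tile_cases[OF w]) (use e in \<open>auto simp: cub_up cub_down\<close>)
  next
    case (2 a b)
    then show ?thesis
      by (cases rule: tile_cases[OF w]) (use e in \<open>auto simp: cub_up cub_down\<close>)
  qed
qed

theorem mainTheorem3:
  assumes "A \<subseteq> tiles"
  shows "(edge_connected A \<longleftrightarrow> connected6 (cub ` A)) \<and>
         (vertex_connected A \<longleftrightarrow> connected26 (cub ` A))"
proof -
  have inj: "inj_on cub A" using cub_inj assms by (rule inj_on_subset)
  have e1: "\<And>u w. u \<in> A \<Longrightarrow> w \<in> A \<Longrightarrow> u \<noteq> w \<Longrightarrow> (share_side u w \<longleftrightarrow> adj6 (cub u) (cub w))"
    using rel assms by blast
  have e2: "\<And>u w. u \<in> A \<Longrightarrow> w \<in> A \<Longrightarrow> u \<noteq> w \<Longrightarrow> (share_vertex u w \<longleftrightarrow> adj26 (cub u) (cub w))"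
    using rel assms by blast
  show ?thesis
    unfolding edge_connected_def connected6_def vertex_connected_def connected26_def
    using chain_transfer[of cub A share_side adj6, OF inj e1] chain_transfer[of cub A share_vertex adj26, OF inj e2] by blast
qed


end
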